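(* Let $s$ be a positive integer. For each $\mathbf{i}\in\mathbb{Z}_{\ge 0}^h$ with $|\mathbf{i}|\le s$ there is a unique $\Omega_{s,\mathbf{i}}\in\mathcal{R}$ with $\deg_{\mathcal{H}}\Omega_{s,\mathbf{i}}\le \deg_{\mathcal{H}}\Lambda_s+|\mathbf{i}|(2g-1)$ such that $$\Lambda_s(\mathbf{f}-\mathbf{R})^{\mathbf{i}}=G^{|\mathbf{i}|}\,\Omega_{s,\mathbf{i}}.$$
   Context: Let $q$ be a prime power. The Hermitian curve over $\mathbb{F}_{q^2}$ is the smooth projective plane curve with affine equation $Y^q+Y=X^{q+1}$; it has genus $g=\tfrac12 q(q-1)$, $n=q^3$ affine rational points $P_1,\dots,P_n$ and the point at infinity $P_\infty$. Let $\mathcal{R}=\bigcup_{m\ge0}\mathcal{L}(mP_\infty)=\mathbb{F}_{q^2}[X,Y]/(Y^q+Y-X^{q+1})$ with basis $\{X^iY^j: i\ge0,0\le j<q\}$; $\deg_{\mathcal{H}} f=-v_{P_\infty}(f)$ ($v_P$ the valuation at $P$), so $\deg_{\mathcal{H}}(X^iY^j)=iq+j(q+1)$; $f\neq 0$ is monic if the coefficient of its basis monomial of largest $\deg_{\mathcal{H}}$ is $1$. Fix integers $h\ge1$ and $m_{\mathrm H}$ with $2(g-1)<m_{\mathrm H}<n$. Let $\mathbf{f}=(f_1,\dots,f_h)\in\mathcal{L}(m_{\mathrm H}P_\infty)^h$ and let $\mathbf{r}=\mathbf{c}+\mathbf{e}\in\mathbb{F}_{q^2}^{h\times n}$, where $\mathbf{c}$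 has $i$-th row $(f_i(P_1),\dots,f_i(P_n))$, and let $\mathcal{E}\subseteq\{1,\dots,n\}$ be the set of indices of nonzero columns of $\mathbf{e}$. Let $\Lambda_s$ be the unique monic element of minimal $\deg_{\mathcal{H}}$ of $\{\Lambda\in\mathcal{R}: v_{P_i}(\Lambda)\ge s\ \forall i\in\mathcal{E}\}$. Let $\mathbf{R}=(R_1,\dots,R_h)\in\mathcal{R}^h$ with $\deg_{\mathcal{H}}R_i<n+2g$ and $R_i(P_j)=r_{i,j}$ for all $i,j$. Let $G=\prod_{\alpha\in\mathbb{F}_{q^2}}(X-\alpha)=X^{q^2}-X$. For $\mathbf{i}\in\mathbb{Z}_{\ge0}^h$: $|\mathbf{i}|=\sum_\mu i_\mu$, and for $\mathbf{a}\in\mathcal{R}^h$, $\mathbf{a}^{\mathbf{i}}=\prod_\mu a_\mu^{i_\mu}$. *)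

theory Defs
  imports "HOL-Computational_Algebra.Computational_Algebra"
begin

(* Bivariate polynomials F[X,Y] are modelled as F[X][Y] = 'a poly poly:
   the outer variable is Y, the inner (coefficient) variable is X.
   The coordinate ring R = F[X,Y]/(Y^q+Y-X^(q+1)) is represented by the
   reduced representatives (degree in Y < q), i.e. the span of the basis
   X^i Y^j, j < q; equality in R is congruence modulo the Hermitian polynomial. *)

definition Xp :: "'a::comm_ring_1 poly poly" where "Xp = [:[:0, 1:]:]"
definition Yp :: "'a::comm_ring_1 poly poly" where "Yp = [:0, 1:]"

definition hermH :: "nat \<Rightarrow> 'a::comm_ring_1 poly poly" where
  "hermH q = Yp ^ q + Yp - Xp ^ (q + 1)"

definition hcong :: "nat \<Rightarrow> 'a::comm_ring_1 poly poly \<Rightarrow> 'a poly poly \<Rightarrow> bool" where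
  "hcong q f g \<longleftrightarrow> hermH q dvd (f - g)"

definition hreduced :: "nat \<Rightarrow> 'a::comm_ring_1 poly poly \<Rightarrow> bool" where
  "hreduced q f \<longleftrightarrow> degree f < q"

definition hsupp :: "'a::comm_ring_1 poly poly \<Rightarrow> (nat \<times> nat) set" where
  "hsupp f = {(i, j). coeff (coeff f j) i \<noteq> 0}"

definition hweight :: "nat \<Rightarrow> nat \<times> nat \<Rightarrow> nat" where
  "hweight q ij = fst ij * q + snd ij * (q + 1)"

definition hdeg :: "nat \<Rightarrow> 'a::comm_ring_1 poly poly \<Rightarrow> nat" where
  "hdeg q f = Max (hweight q ` hsupp f)"

definition hlc :: "nat \<Rightarrow> 'a::comm_ring_1 poly poly \<Rightarrow> 'a" where
  "hlc q f = (let ij = (THE ij. ij \<in> hsupp f \<and> hweight q ij = hdeg q f)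
              in coeff (coeff f (snd ij)) (fst ij))"

definition hmonic :: "nat \<Rightarrow> 'a::comm_ring_1 poly poly \<Rightarrow> bool" where
  "hmonic q f \<longleftrightarrow> f \<noteq> 0 \<and> hlc q f = 1"

definition HermPts :: "nat \<Rightarrow> ('a::field \<times> 'a) set" where
  "HermPts q = {(a, b). b ^ q + b = a ^ (q + 1)}"

definition heval :: "'a::comm_ring_1 poly poly \<Rightarrow> 'a \<times> 'a \<Rightarrow> 'a" where
  "heval f P = poly (map_poly (\<lambda>c. poly c (fst P)) f) (snd P)"

text \<open>v_P(f) \<ge> s for an affine point P=(a,b) of the (smooth) curve: f lies in
  M_P^s, where M_P = (X - a, Y - b) is the maximal ideal of R at P (R is a Dedekind
  domain, so M_P^s = {f. v_P(f) \<ge> s}).\<close>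
definition hval_ge :: "nat \<Rightarrow> 'a::comm_ring_1 \<times> 'a \<Rightarrow> nat \<Rightarrow> 'a poly poly \<Rightarrow> bool" where
  "hval_ge q P s f \<longleftrightarrow>
     (\<exists>c d. f = (\<Sum>k\<le>s. c k * (Xp - [:[:fst P:]:]) ^ k * (Yp - [:[:snd P:]:]) ^ (s - k))
              + d * hermH q)"

text \<open>G = prod over alpha of (X - alpha) = X^(q^2) - X\<close>
definition Gp :: "nat \<Rightarrow> 'a::comm_ring_1 poly poly" where
  "Gp q = Xp ^ (q ^ 2) - Xp"

definition hgenus :: "nat \<Rightarrow> nat" where
  "hgenus q = q * (q - 1) div 2"

end

theory Submission
  imports Defs
begin


lemma of_nat_card_zero: "of_nat (card (UNIV :: 'a::{ring_1,finite} set)) = (0::'a)"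
proof -
  have "(\<Sum>y\<in>(UNIV::'a set). y + 1) = (\<Sum>y\<in>UNIV. y)"
    by (rule sum.reindex_bij_witness[of _ "\<lambda>y. y - 1" "\<lambda>y. y + 1"]) auto
  then show ?thesis by (simp add: sum.distrib)
qed


lemma ff_pow_card:
  fixes x :: "'a::{field,finite}"
  shows "x ^ card (UNIV :: 'a set) = x"
proof (cases "x = 0")
  case False
  have "x * (\<Prod>y\<in>UNIV-{0}. x * y) = x * x ^ (card (UNIV :: 'a set) - 1) * \<Prod>(UNIV-{0})"
    by (simp add: prod.distrib mult_ac)
  also have "x * x ^ (card (UNIV :: 'a set) - 1) = x ^ Suc (card (UNIV :: 'a set) - 1)"
    by (subst power_Suc) auto
  also have "Suc (card (UNIV :: 'a set) - 1) = card (UNIV :: 'a set)"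
    using finite_UNIV_card_ge_0[where ?'a = 'a] by simp
  also have "(\<Prod>y\<in>UNIV-{0}. x * y) = (\<Prod>y\<in>UNIV-{0}. y)"
    by (rule prod.reindex_bij_witness[of _ "\<lambda>y. y / x" "\<lambda>y. x * y"]) (use False in auto)
  finally show ?thesis
    by simp
qed (use finite_UNIV_card_ge_0[where ?'a = 'a] in auto)

lemma char_facts:
  assumes p: "prime (p::nat)" and k: "k > 0" and qd: "q = p ^ k"
    and card: "card (UNIV :: 'a::{field,finite} set) = q ^ 2"
  shows "CHAR('a) = p" "of_nat q = (0::'a)" "\<And>x y :: 'a. (x + y) ^ q = x ^ q + y ^ q"
    "q \<ge> 2"
proof -
  have pos: "CHAR('a) > 0" by (simp add: finite_imp_CHAR_pos)
  have pr: "prime CHAR('a)" using prime_CHAR_semidom[OF pos] .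
  have "CHAR('a) dvd card (UNIV :: 'a set)" using of_nat_card_zero[where 'a='a] of_nat_eq_0_iff_char_dvd by blast
  then have "CHAR('a) dvd p ^ (2*k)" using card qd
    by (simp add: power_mult[symmetric] mult.commute)
  then have "CHAR('a) dvd p" using pr prime_dvd_power by blast
  then show c: "CHAR('a) = p" using pr p by (metis primes_dvd_imp_eq)
  show "of_nat q = (0::'a)" using c qd k
    by (metis dvd_power of_nat_eq_0_iff_char_dvd)
  show "\<And>x y :: 'a. (x + y) ^ q = x ^ q + y ^ q"
    using freshmans_dream'[where 'a='a and m=q and n=k] c pr qd by simp
  show "q \<ge> 2" using qd k p
    by (metis One_nat_def Suc_1 less_eq_Suc_le one_less_power prime_gt_1_nat)
qed



lemma roots_card_le:
  fixes p :: "'a::{field} poly"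
  assumes "coeff p n \<noteq> 0" "degree p \<le> n"
  shows "card {x. poly p x = 0} \<le> n"
proof -
  have "p \<noteq> 0" using assms by auto
  then show ?thesis using card_poly_roots_bound[of p] assms by linarith
qed

lemma fiber_card:
  fixes \<alpha> :: "'a::{field,finite}"
  assumes frob: "\<And>x y :: 'a. (x + y) ^ q = x ^ q + y ^ q"
    and card: "card (UNIV :: 'a set) = q ^ 2" and q2: "q \<ge> 2"
  shows "q \<le> card {b. b ^ q + b = \<alpha> ^ (q + 1)}"
proof -
  define T where "T = (\<lambda>y::'a. y ^ q + y)"
  define Fq where "Fq = {c::'a. c ^ q = c}"
  have pw: "y ^ (q^2) = y" for y :: 'a using ff_pow_card[of y] card by simp
  have TF: "T y \<in> Fq" for y
  proof -
    have "(y ^ q) ^ q = y" using pw[of y] by (metis power_mult power2_eq_square)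
    then show ?thesis unfolding T_def Fq_def using frob[of "y^q" y] by (simp add: add.commute)
  qed
  have cFq: "card Fq \<le> q"
  proof -
    have e: "Fq = {x. poly (monom 1 q - [:0,1:]) x = 0}" unfolding Fq_def by (auto simp: poly_monom)
    have "coeff [:0,1::'a:] q = 0" by (rule coeff_eq_0) (use q2 in simp)
    then have c: "coeff (monom 1 q - [:0,1:]) q \<noteq> (0::'a)" by simp
    have d: "degree (monom 1 q - [:0,1::'a:]) \<le> q" using q2
      by (intro degree_diff_le) (auto simp: degree_monom_le)
    show ?thesis using roots_card_le[OF c d] e by simp
  qed
  have cfib: "card {y. T y = c} \<le> q" for c
  proof -
    have e: "{y. T y = c} = {x. poly (monom 1 q + [:-c,1:]) x = 0}" unfolding T_def
      by (auto simp: poly_monom algebra_simps)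
    have "coeff [:-c,1::'a:] q = 0" by (rule coeff_eq_0) (use q2 in simp)
    then have c: "coeff (monom 1 q + [:-c,1:]) q \<noteq> (0::'a)" by simp
    have d: "degree (monom 1 q + [:-c,1::'a:]) \<le> q" using q2
      by (intro degree_add_le) (auto simp: degree_monom_le)
    show ?thesis unfolding e by (rule roots_card_le[OF c d])
  qed
  have finF: "finite Fq" by simp
  have U: "UNIV = (\<Union>c\<in>Fq. {y. T y = c})" using TF by blast
  have "card (\<Union>c\<in>Fq. {y. T y = c}) = (\<Sum>c\<in>Fq. card {y. T y = c})"
    by (rule card_UN_disjoint) (auto simp: finF)
  then have sumeq: "(\<Sum>c\<in>Fq. card {y. T y = c}) = q * q" using card U
    by (metis power2_eq_square)
  have aF: "\<alpha> ^ (q + 1) \<in> Fq"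
  proof -
    have "(\<alpha> ^ (q+1)) ^ q = \<alpha> ^ (q^2) * \<alpha> ^ q"
      by (metis add.commute power_add power_mult power2_eq_square distrib_right mult_1 power_one_right)
    then show ?thesis unfolding Fq_def using pw by (simp add: mult.commute)
  qed
  show ?thesis
  proof (rule ccontr)
    assume "\<not> ?thesis"
    then have lt: "card {y. T y = \<alpha> ^ (q+1)} < q" unfolding T_def by linarith
    have "(\<Sum>c\<in>Fq. card {y. T y = c}) < (\<Sum>c\<in>Fq. q)"
    proof (rule sum_strict_mono_ex1)
      show "finite Fq" by (rule finF)
      show "\<forall>x\<in>Fq. card {y. T y = x} \<le> q" using cfib by blast
      show "\<exists>a\<in>Fq. card {y. T y = a} < q" using aF lt by blast
    qed
    also have "\<dots> = card Fq * q" by simp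
    also have "\<dots> \<le> q * q" using cFq by simp
    finally show False using sumeq by simp
  qed
qed



definition xP :: "'a::comm_ring_1 \<Rightarrow> 'a poly poly" where "xP a = Xp - [:[:a:]:]"
definition yP :: "'a::comm_ring_1 \<Rightarrow> 'a poly poly" where "yP b = Yp - [:[:b:]:]"

definition ev :: "'a::comm_ring_1 \<times> 'a \<Rightarrow> 'a poly poly \<Rightarrow> 'a" where
  "ev P F = poly (poly F [:snd P:]) (fst P)"

lemma heval_ev: "heval F P = ev P F"
proof (induction F)
  case 0 then show ?case by (simp add: heval_def ev_def)
next
  case (pCons c F)
  then show ?case by (simp add: heval_def ev_def map_poly_pCons)
qed

lemma ev_simps [simp]:
  "ev P (A + B) = ev P A + ev P B" "ev P (A - B) = ev P A - ev P B" "ev P (A * B) = ev P A * ev P B"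
  "ev P (- A) = - ev P A" "ev P (A ^ n) = ev P A ^ n" "ev P 0 = 0" "ev P 1 = 1"
  "ev P [:[:c:]:] = c"
  by (simp_all add: ev_def)

lemma ev_xP [simp]: "ev (a, b) (xP a) = 0" by (simp add: ev_def xP_def Xp_def)
lemma ev_yP [simp]: "ev (a, b) (yP b) = 0" by (simp add: ev_def yP_def Yp_def)

lemma ev_H: "(a, b) \<in> HermPts q \<Longrightarrow> ev (a, b) (hermH q) = 0"
  by (simp add: ev_def hermH_def Xp_def Yp_def HermPts_def poly_const_pow)

fun Mk :: "'a::comm_ring_1 \<times> 'a \<Rightarrow> nat \<Rightarrow> 'a poly poly set" where
  "Mk P 0 = UNIV"
| "Mk P (Suc k) = {xP (fst P) * A + yP (snd P) * B | A B. A \<in> Mk P k \<and> B \<in> Mk P k}"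

declare Mk.simps(2)[simp del]

lemma Mk_SucI: "A \<in> Mk P k \<Longrightarrow> B \<in> Mk P k \<Longrightarrow> F = xP (fst P) * A + yP (snd P) * B \<Longrightarrow> F \<in> Mk P (Suc k)"
  by (simp only: Mk.simps) blast

lemma Mk_SucE: "F \<in> Mk P (Suc k) \<Longrightarrow> (\<And>A B. A \<in> Mk P k \<Longrightarrow> B \<in> Mk P k \<Longrightarrow> F = xP (fst P) * A + yP (snd P) * B \<Longrightarrow> thesis) \<Longrightarrow> thesis"
  by (simp only: Mk.simps) blast

lemma Mk_zero [simp]: "0 \<in> Mk P k"
proof (induction k)
  case (Suc k) then show ?case by (intro Mk_SucI[of 0 P k 0]) simp_all
qed simp

lemma Mk_add: "A \<in> Mk P k \<Longrightarrow> B \<in> Mk P k \<Longrightarrow> A + B \<in> Mk P k"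
proof (induction k arbitrary: A B)
  case (Suc k)
  from Suc.prems(1) obtain A1 B1 where 1: "A1 \<in> Mk P k" "B1 \<in> Mk P k" "A = xP (fst P) * A1 + yP (snd P) * B1"
    by (rule Mk_SucE)
  from Suc.prems(2) obtain A2 B2 where 2: "A2 \<in> Mk P k" "B2 \<in> Mk P k" "B = xP (fst P) * A2 + yP (snd P) * B2"
    by (rule Mk_SucE)
  show ?case
    by (rule Mk_SucI[OF Suc.IH[OF 1(1) 2(1)] Suc.IH[OF 1(2) 2(2)]]) (simp add: 1 2 algebra_simps)
qed simp

lemma Mk_mult: "A \<in> Mk P k \<Longrightarrow> C * A \<in> Mk P k"
proof (induction k arbitrary: A)
  case (Suc k)
  from Suc.prems(1) obtain A1 B1 where 1: "A1 \<in> Mk P k" "B1 \<in> Mk P k" "A = xP (fst P) * A1 + yP (snd P) * B1"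
    by (rule Mk_SucE)
  show ?case
    by (rule Mk_SucI[OF Suc.IH[OF 1(1)] Suc.IH[OF 1(2)]]) (simp add: 1 algebra_simps)
qed simp

lemma Mk_mult2: "A \<in> Mk P k \<Longrightarrow> A * C \<in> Mk P k"
  using Mk_mult[of A P k C] by (simp add: mult.commute)

lemma Mk_neg: "A \<in> Mk P k \<Longrightarrow> - A \<in> Mk P k"
  using Mk_mult[of A P k "-1"] by simp

lemma Mk_diff: "A \<in> Mk P k \<Longrightarrow> B \<in> Mk P k \<Longrightarrow> A - B \<in> Mk P k"
  using Mk_add[of A P k "- B"] Mk_neg[of B P k] by simp

lemma Mk_prod: "A \<in> Mk P k \<Longrightarrow> B \<in> Mk P l \<Longrightarrow> A * B \<in> Mk P (k + l)"
proof (induction k arbitrary: A)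
  case 0 then show ?case by (simp add: Mk_mult)
next
  case (Suc k)
  from Suc.prems(1) obtain A1 B1 where 1: "A1 \<in> Mk P k" "B1 \<in> Mk P k" "A = xP (fst P) * A1 + yP (snd P) * B1"
    by (rule Mk_SucE)
  show ?case unfolding add_Suc
    by (rule Mk_SucI[OF Suc.IH[OF 1(1) Suc.prems(2)] Suc.IH[OF 1(2) Suc.prems(2)]]) (simp add: 1 algebra_simps)
qed

lemma Mk_Suc_le: "A \<in> Mk P (Suc k) \<Longrightarrow> A \<in> Mk P k"
proof (induction k arbitrary: A)
  case 0 then show ?case by simp
next
  case (Suc k)
  from Suc.prems(1) obtain A1 B1 where 1: "A1 \<in> Mk P (Suc k)" "B1 \<in> Mk P (Suc k)" "A = xP (fst P) * A1 + yP (snd P) * B1"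
    by (rule Mk_SucE)
  show ?case
    by (rule Mk_SucI[OF Suc.IH[OF 1(1)] Suc.IH[OF 1(2)]]) (simp add: 1)
qed

lemma Mk_mono: "j \<le> k \<Longrightarrow> A \<in> Mk P k \<Longrightarrow> A \<in> Mk P j"
  by (induction k rule: dec_induct) (auto intro: Mk_Suc_le)

lemma Mk_x: "xP (fst P) \<in> Mk P 1"
  using Mk_SucI[of 1 P 0 0 "xP (fst P)"] by simp
lemma Mk_y: "yP (snd P) \<in> Mk P 1"
  using Mk_SucI[of 0 P 0 1 "yP (snd P)"] by simp

lemma Mk_pow: "A \<in> Mk P 1 \<Longrightarrow> A ^ n \<in> Mk P n"
proof (induction n)
  case 0 then show ?case by simp
next
  case (Suc n) then show ?case using Mk_prod[of A P 1 "A ^ n" n] by simp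
qed

lemma Mk_sum: "finite S \<Longrightarrow> (\<And>i. i \<in> S \<Longrightarrow> f i \<in> Mk P k) \<Longrightarrow> sum f S \<in> Mk P k"
  by (induction S rule: finite_induct) (auto intro: Mk_add)

lemma Mk_ev: "A \<in> Mk P (Suc k) \<Longrightarrow> ev P A = 0"
  by (cases P) (auto elim: Mk_SucE)

definition V :: "nat \<Rightarrow> 'a::comm_ring_1 \<times> 'a \<Rightarrow> nat \<Rightarrow> 'a poly poly \<Rightarrow> bool" where
  "V q P k F \<longleftrightarrow> (\<exists>m d. m \<in> Mk P k \<and> F = m + d * hermH q)"

lemma V_Mk: "m \<in> Mk P k \<Longrightarrow> V q P k (m + d * hermH q)"
  unfolding V_def by blast

lemma V_I: "m \<in> Mk P k \<Longrightarrow> F = m + d * hermH q \<Longrightarrow> V q P k F"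
  unfolding V_def by blast

lemma V_E: "V q P k F \<Longrightarrow> (\<And>m d. m \<in> Mk P k \<Longrightarrow> F = m + d * hermH q \<Longrightarrow> thesis) \<Longrightarrow> thesis"
  unfolding V_def by blast

lemma V_add: "V q P k A \<Longrightarrow> V q P k B \<Longrightarrow> V q P k (A + B)"
proof -
  assume "V q P k A" "V q P k B"
  then obtain m d m' d' where 1: "m \<in> Mk P k" "A = m + d * hermH q" "m' \<in> Mk P k" "B = m' + d' * hermH q"
    by (meson V_E)
  show ?thesis by (rule V_I[OF Mk_add[OF 1(1) 1(3)], where d="d + d'"]) (simp add: 1 algebra_simps)
qed

lemma V_mult: "V q P k A \<Longrightarrow> V q P k (C * A)"
proof -
  assume "V q P k A"
  then obtain m d where 1: "m \<in> Mk P k" "A = m + d * hermH q" by (rule V_E)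
  show ?thesis by (rule V_I[OF Mk_mult[OF 1(1), of C], where d="C * d"]) (simp add: 1 algebra_simps)
qed

lemma V_neg: "V q P k A \<Longrightarrow> V q P k (- A)"
  using V_mult[of q P k A "-1"] by simp

lemma V_diff: "V q P k A \<Longrightarrow> V q P k B \<Longrightarrow> V q P k (A - B)"
  using V_add[of q P k A "- B"] V_neg[of q P k B] by simp

lemma V_prod: "V q P k A \<Longrightarrow> V q P l B \<Longrightarrow> V q P (k + l) (A * B)"
proof -
  assume "V q P k A" "V q P l B"
  then obtain m d m' d' where 1: "m \<in> Mk P k" "A = m + d * hermH q" "m' \<in> Mk P l" "B = m' + d' * hermH q"
    by (meson V_E)
  show ?thesis by (rule V_I[OF Mk_prod[OF 1(1) 1(3)], where d="m * d' + d * m' + d * d' * hermH q"]) (simp add: 1 algebra_simps)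
qed

lemma V_mono: "j \<le> k \<Longrightarrow> V q P k A \<Longrightarrow> V q P j A"
  unfolding V_def using Mk_mono by blast

lemma V_pow: "V q P 1 A \<Longrightarrow> V q P n (A ^ n)"
proof (induction n)
  case 0 then show ?case by (intro V_I[where m=1 and d=0]) simp_all
next
  case (Suc n) then show ?case using V_prod[of q P 1 A n "A ^ n"] by simp
qed

lemma V_zero: "V q P k 0"
  by (intro V_I[where m=0 and d=0]) simp_all

lemma V_Hmult: "V q P k (d * hermH q)"
  by (intro V_I[where m=0 and d=d]) simp_all

lemma V_ev: "P \<in> HermPts q \<Longrightarrow> V q P (Suc k) A \<Longrightarrow> ev P A = 0"
  by (cases P) (auto elim!: V_E dest: Mk_ev simp: ev_H)

lemma hval_ge_V: "hval_ge q P s F \<Longrightarrow> V q P s F"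
proof -
  assume "hval_ge q P s F"
  then obtain c d where F: "F = (\<Sum>k\<le>s. c k * (Xp - [:[:fst P:]:]) ^ k * (Yp - [:[:snd P:]:]) ^ (s - k)) + d * hermH q"
    unfolding hval_ge_def by blast
  have "(\<Sum>k\<le>s. c k * (Xp - [:[:fst P:]:]) ^ k * (Yp - [:[:snd P:]:]) ^ (s - k)) \<in> Mk P s"
  proof (rule Mk_sum)
    fix k assume "k \<in> {..s}"
    then have "(xP (fst P)) ^ k * (yP (snd P)) ^ (s - k) \<in> Mk P (k + (s - k))"
      by (intro Mk_prod Mk_pow Mk_x Mk_y)
    then have "(xP (fst P)) ^ k * (yP (snd P)) ^ (s - k) \<in> Mk P s" using \<open>k \<in> {..s}\<close> by simp
    then show "c k * (Xp - [:[:fst P:]:]) ^ k * (Yp - [:[:snd P:]:]) ^ (s - k) \<in> Mk P s"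
      using Mk_mult[of _ P s "c k"] by (simp add: xP_def yP_def mult.assoc)
  qed simp
  then show ?thesis using F V_Mk by blast
qed



lemma ev_Xp [simp]: "ev (a, b) Xp = a" by (simp add: ev_def Xp_def)
lemma ev_Yp [simp]: "ev (a, b) Yp = b" by (simp add: ev_def Yp_def)
lemma ev_const [simp]: "ev (a, b) [:u:] = poly u a" by (simp add: ev_def)

lemma xP_eq: "xP a = [:[:-a, 1:]:]" by (simp add: xP_def Xp_def)
lemma yP_eq: "yP b = [:-[:b:], 1:]" by (simp add: yP_def Yp_def)

lemma H_eq: "hermH q = monom 1 q + monom 1 1 - monom ([:0,1:] ^ (q+1)) 0"
  by (simp add: hermH_def Xp_def Yp_def monom_altdef poly_const_pow)

lemma H_coeff: "q \<ge> 2 \<Longrightarrow> coeff (hermH q :: 'a::comm_ring_1 poly poly) q = 1"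
  by (simp add: H_eq coeff_monom)

lemma H_degree: assumes "q \<ge> 2" shows "degree (hermH q :: 'a::comm_ring_1 poly poly) = q"
proof (rule antisym)
  show "degree (hermH q :: 'a poly poly) \<le> q" unfolding H_eq
    by (intro degree_diff_le degree_add_le) (use assms in \<open>auto simp: degree_monom_le intro: order.trans[OF degree_monom_le]\<close>)
  show "q \<le> degree (hermH q :: 'a poly poly)" by (intro le_degree) (simp add: H_coeff assms)
qed

lemma H_nz: "q \<ge> 2 \<Longrightarrow> (hermH q :: 'a::comm_ring_1 poly poly) \<noteq> 0"
  by (metis H_coeff coeff_0 zero_neq_one)

lemma H_divmod:
  fixes F :: "'a::comm_ring_1 poly poly"
  assumes "q \<ge> 2"
  shows "\<exists>Q r. F = hermH q * Q + r \<and> degree r < (q::nat)"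
proof -
  obtain Q r where pd: "pseudo_divmod F (hermH q) = (Q, r)" by (cases "pseudo_divmod F (hermH q)") auto
  note pd1 = pseudo_divmod(1)[OF H_nz[OF assms] pd]
  note pd2 = pseudo_divmod(2)[OF H_nz[OF assms] pd]
  have lc: "coeff (hermH q) (degree (hermH q)) = (1::'a poly)"
    by (simp add: H_coeff H_degree assms)
  from pd1 have "F = hermH q * Q + r" unfolding lc by simp
  moreover have "degree r < q" using pd2 assms by (auto simp: H_degree)
  ultimately show ?thesis by blast
qed

lemma red_unique:
  fixes r :: "'a::idom poly poly"
  assumes "q \<ge> 2" "degree r < q" "hermH q dvd r"
  shows "r = 0"
proof (rule ccontr)
  assume nz: "r \<noteq> 0"
  from assms(3) obtain t where t: "r = hermH q * t" by (elim dvdE)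
  with nz have "t \<noteq> 0" by auto
  then have "degree r = q + degree t" using t assms(1)
    by (simp add: degree_mult_eq H_degree H_nz)
  with assms(2) show False by simp
qed

lemma const_cancel:
  fixes Z :: "'a::idom poly poly"
  assumes q: "q \<ge> 2" and c: "c \<noteq> 0" and d: "hermH q dvd [:c:] * Z"
  shows "hermH q dvd Z"
proof -
  obtain Q r where Zr: "Z = hermH q * Q + r" "degree r < q" using H_divmod[OF q] by blast
  have "hermH q dvd [:c:] * r"
  proof -
    have "[:c:] * r = [:c:] * Z - hermH q * ([:c:] * Q)" using Zr by (simp add: algebra_simps)
    then show ?thesis using d dvd_diff[of "hermH q" "[:c:]*Z" "hermH q * ([:c:] * Q)"] by (metis dvd_triv_left)
  qed
  moreover have "degree ([:c:] * r) < q" using Zr(2) by simp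
  ultimately have "[:c:] * r = 0" using red_unique[OF q] by blast
  then have "r = 0" using c by simp
  then show ?thesis using Zr by simp
qed

lemma zero_Mk1:
  fixes F :: "'a::comm_ring_1 poly poly"
  assumes "ev (a, b) F = 0"
  shows "F \<in> Mk (a, b) 1"
proof -
  define F1 where "F1 = poly F [:b:]"
  have e1: "[:-[:b:], 1:] * synthetic_div F [:b:] + [:F1:] = F"
    unfolding F1_def by (rule synthetic_div_correct')
  have e2: "[:-a, 1:] * synthetic_div F1 a + [:poly F1 a:] = F1"
    by (rule synthetic_div_correct')
  have "poly F1 a = 0" using assms by (simp add: ev_def F1_def)
  with e2 have "F1 = [:-a, 1:] * synthetic_div F1 a" by simp
  then have "[:F1:] = xP a * [:synthetic_div F1 a:]" by (simp add: xP_eq)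
  with e1 have "F = xP a * [:synthetic_div F1 a:] + yP b * synthetic_div F [:b:]"
    by (simp add: yP_eq add.commute)
  then show ?thesis using Mk_SucI[of "[:synthetic_div F1 a:]" "(a,b)" 0 "synthetic_div F [:b:]" F] by simp
qed

lemma unit_cancel:
  fixes F :: "'a::field poly poly"
  assumes W: "ev P W \<noteq> 0" and V: "V q P k (W * F)"
  shows "V q P k F"
proof -
  obtain a b where P: "P = (a, b)" by (cases P)
  define c where "c = ev P W"
  define m where "m = W - [:[:c:]:]"
  have "ev P m = 0" by (simp add: m_def c_def P)
  then have m1: "m \<in> Mk P 1" using zero_Mk1 P by blast
  have Fe: "F = [:[:1 / c:]:] * (W * F - m * F)"
  proof -
    have "W * F - m * F = [:[:c:]:] * F" by (simp add: m_def algebra_simps)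
    then show ?thesis using W by (simp add: c_def one_pCons[symmetric])
  qed
  have "j \<le> k \<Longrightarrow> V q P j F" for j
  proof (induction j)
    case 0 show ?case by (rule V_I[where m=F and d=0]) simp_all
  next
    case (Suc j)
    have "V q P (Suc j) (W * F)" using V_mono[OF Suc.prems V] .
    moreover have "V q P (Suc j) (m * F)"
      using V_prod[OF V_I[OF m1, where d=0 and F=m] Suc.IH] Suc.prems by simp
    ultimately have "V q P (Suc j) (W * F - m * F)" by (rule V_diff)
    then show ?case using V_mult Fe by metis
  qed
  then show ?thesis by simp
qed



lemma ev_sum: "ev P (sum f S) = (\<Sum>i\<in>S. ev P (f i))"
  by (induction S rule: infinite_finite_induct) auto

definition Bq :: "nat \<Rightarrow> 'a::comm_ring_1 \<Rightarrow> 'a poly poly" where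
  "Bq q b = (\<Sum>i<q. [:[:b:]:] ^ (q - Suc i) * Yp ^ i) + 1"
definition Aq :: "nat \<Rightarrow> 'a::comm_ring_1 \<Rightarrow> 'a poly poly" where
  "Aq q a = (\<Sum>i<q+1. [:[:a:]:] ^ (q + 1 - Suc i) * Xp ^ i)"

lemma B_id:
  fixes a b :: "'a::field"
  assumes P: "(a, b) \<in> HermPts q"
  shows "yP b * Bq q b = hermH q + xP a * Aq q a"
proof -
  have 1: "Yp ^ q - [:[:b:]:] ^ q = (Yp - [:[:b:]:]) * (\<Sum>i<q. [:[:b:]:] ^ (q - Suc i) * Yp ^ i)"
    by (rule power_diff_sumr2)
  have 2: "Xp ^ (q+1) - [:[:a:]:] ^ (q+1) = (Xp - [:[:a:]:]) * (\<Sum>i<q+1. [:[:a:]:] ^ (q + 1 - Suc i) * Xp ^ i)"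
    by (rule power_diff_sumr2)
  have 3: "[:[:b:]:] ^ q + [:[:b:]:] = ([:[:a:]:] ^ (q+1) :: 'a poly poly)"
    using P by (simp add: HermPts_def poly_const_pow)
  have "yP b * Bq q b = (Yp ^ q - [:[:b:]:] ^ q) + (Yp - [:[:b:]:])"
    unfolding 1 by (simp add: yP_def Bq_def algebra_simps)
  also have "\<dots> = hermH q + (Xp ^ (q+1) - [:[:a:]:] ^ (q+1))"
    using 3 by (simp add: hermH_def algebra_simps)
  also have "\<dots> = hermH q + xP a * Aq q a"
    unfolding 2 by (simp add: xP_def Aq_def)
  finally show ?thesis .
qed

lemma ev_B:
  fixes a b :: "'a::field"
  assumes q0: "of_nat q = (0::'a)" and q1: "q \<ge> 1"
  shows "ev (a, b) (Bq q b) = 1"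
proof -
  have "(\<Sum>i<q. b ^ (q - Suc i) * b ^ i) = (\<Sum>i<q. b ^ (q - 1))"
  proof (rule sum.cong)
    fix i assume "i \<in> {..<q}"
    then have "q - Suc i + i = q - 1" by auto
    then show "b ^ (q - Suc i) * b ^ i = b ^ (q - 1)" by (metis power_add)
  qed simp
  also have "\<dots> = of_nat q * b ^ (q - 1)" by simp
  also have "\<dots> = 0" using q0 by simp
  finally show ?thesis by (simp add: Bq_def ev_sum)
qed

lemma Mk_B:
  fixes a b :: "'a::field"
  assumes P: "(a, b) \<in> HermPts q" and m: "m \<in> Mk (a, b) k"
  shows "\<exists>C D. Bq q b ^ k * m = xP a ^ k * C + D * hermH q"
  using m
proof (induction k arbitrary: m)
  case 0 then show ?case by (intro exI[of _ m] exI[of _ 0]) simp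
next
  case (Suc k)
  from Suc.prems obtain A1 B1 where 1: "A1 \<in> Mk (a,b) k" "B1 \<in> Mk (a,b) k" "m = xP a * A1 + yP b * B1"
    by (auto elim: Mk_SucE)
  obtain C1 D1 where e1: "Bq q b ^ k * A1 = xP a ^ k * C1 + D1 * hermH q" using Suc.IH[OF 1(1)] by blast
  obtain C2 D2 where e2: "Bq q b ^ k * B1 = xP a ^ k * C2 + D2 * hermH q" using Suc.IH[OF 1(2)] by blast
  define x where "x = xP a"
  define y where "y = yP b"
  define B where "B = Bq q b"
  define A where "A = Aq q a"
  define H where "H = (hermH q :: 'a poly poly)"
  have yB: "y * B = H + x * A" unfolding x_def y_def B_def A_def H_def by (rule B_id[OF P])
  have "B ^ Suc k * m = x * B * (B ^ k * A1) + (y * B) * (B ^ k * B1)"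
    unfolding 1 x_def y_def B_def by (simp add: algebra_simps)
  also have "\<dots> = x * B * (x ^ k * C1 + D1 * H) + (H + x * A) * (x ^ k * C2 + D2 * H)"
    unfolding yB using e1 e2 by (simp add: x_def B_def H_def)
  also have "\<dots> = x ^ Suc k * (B * C1 + A * C2) + (x * B * D1 + x ^ k * C2 + D2 * H + x * A * D2) * H"
    by (simp add: algebra_simps)
  finally show ?case unfolding x_def B_def H_def by blast
qed

lemma cancel_x:
  fixes a b :: "'a::field"
  assumes P: "(a, b) \<in> HermPts q" and q0: "of_nat q = (0::'a)" and q2: "q \<ge> 2"
    and W: "ev (a, b) W \<noteq> 0" and V: "V q (a, b) (Suc k) (xP a * W * F)"
  shows "V q (a, b) k F"
proof -
  obtain m d where md: "m \<in> Mk (a,b) (Suc k)" "xP a * W * F = m + d * hermH q" using V by (rule V_E)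
  obtain C D where CD: "Bq q b ^ Suc k * m = xP a ^ Suc k * C + D * hermH q" using Mk_B[OF P md(1)] by blast
  define Z where "Z = Bq q b ^ Suc k * W * F - xP a ^ k * C"
  have "xP a * Z = Bq q b ^ Suc k * (xP a * W * F) - xP a ^ Suc k * C"
    unfolding Z_def by (simp add: algebra_simps)
  also have "\<dots> = (Bq q b ^ Suc k * m - xP a ^ Suc k * C) + Bq q b ^ Suc k * d * hermH q"
    unfolding md(2) by (simp add: algebra_simps)
  also have "\<dots> = hermH q * (D + Bq q b ^ Suc k * d)"
    unfolding CD by (simp add: algebra_simps)
  finally have hd: "hermH q dvd [:[:-a, 1:]:] * Z" by (simp add: xP_eq)
  have "hermH q dvd Z" by (rule const_cancel[OF q2 _ hd]) simp
  then obtain E where E: "Z = hermH q * E" by (elim dvdE)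
  have "xP a ^ k * C \<in> Mk (a, b) k"
    using Mk_mult2[OF Mk_pow[OF Mk_x[of "(a,b)"]], of k C] by simp
  then have "V q (a, b) k ((Bq q b ^ Suc k * W) * F)"
    by (rule V_I[where d=E]) (use E in \<open>simp add: Z_def algebra_simps\<close>)
  moreover have "ev (a, b) (Bq q b ^ Suc k * W) \<noteq> 0" using W ev_B[OF q0] q2 by simp
  ultimately show ?thesis using unit_cancel by blast
qed

lemma G_factor:
  fixes a :: "'a::field"
  assumes N0: "of_nat N = (0::'a)" and aN: "a ^ N = a" and N1: "N \<ge> 1"
  shows "\<exists>u. Xp ^ N - Xp = xP a * [:u:] \<and> poly u a = -1"
proof -
  define X where "X = [:0, 1::'a:]"
  define S where "S = (\<Sum>i<N. [:a:] ^ (N - Suc i) * X ^ i)"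
  have 1: "X ^ N - [:a:] ^ N = (X - [:a:]) * S" unfolding S_def by (rule power_diff_sumr2)
  have aN': "[:a:] ^ N = [:a:]" using aN by (simp add: poly_const_pow)
  have "(X - [:a:]) * (S - 1) = (X - [:a:]) * S - (X - [:a:])" by (simp add: right_diff_distrib)
  also have "\<dots> = X ^ N - [:a:] ^ N - (X - [:a:])" by (simp only: 1)
  also have "\<dots> = X ^ N - X" using aN' by simp
  finally have "X ^ N - X = (X - [:a:]) * (S - 1)" by simp
  moreover have "X - [:a:] = [:-a, 1:]" by (simp add: X_def)
  moreover have "Xp ^ N - Xp = [:X ^ N - X:]" by (simp add: Xp_def X_def poly_const_pow)
  ultimately have e: "Xp ^ N - Xp = xP a * [:S - 1:]" by (simp add: xP_eq)
  have "poly S a = (\<Sum>i<N. a ^ (N - 1))"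
    unfolding S_def poly_sum
  proof (rule sum.cong)
    fix i assume "i \<in> {..<N}"
    then have "N - Suc i + i = N - 1" by auto
    then show "poly ([:a:] ^ (N - Suc i) * X ^ i) a = a ^ (N - 1)"
      by (simp add: X_def poly_const_pow) (metis power_add)
  qed simp
  also have "\<dots> = 0" using N0 by simp
  finally have "poly (S - 1) a = -1" by simp
  with e show ?thesis by blast
qed



lemma all_roots_dvd:
  fixes c :: "'a::{field,finite} poly"
  assumes card: "card (UNIV :: 'a set) = N" and N: "N \<ge> 2" and roots: "\<And>\<alpha>. poly c \<alpha> = 0"
  shows "([:0,1:] ^ N - [:0,1:]) dvd c"
proof -
  define G0 where "G0 = ([:0,1:] ^ N - [:0,1:] :: 'a poly)"
  have G0e: "G0 = monom 1 N - [:0,1:]" by (simp add: G0_def monom_altdef)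
  have "coeff [:0,1::'a:] N = 0" by (rule coeff_eq_0) (use N in simp)
  then have cG: "coeff G0 N = 1" by (simp add: G0e)
  then have G0nz: "G0 \<noteq> 0" by auto
  have dG: "degree G0 \<le> N" unfolding G0e using N
    by (intro degree_diff_le) (auto simp: degree_monom_le)
  have pG: "poly G0 x = 0" for x
    using ff_pow_card[of x] card by (simp add: G0_def)
  define t where "t = c mod G0"
  have ct: "c = G0 * (c div G0) + t" unfolding t_def by simp
  have pt: "poly t x = 0" for x
  proof -
    have "poly c x = poly G0 x * poly (c div G0) x + poly t x" by (subst ct) simp
    then show ?thesis using roots pG by simp
  qed
  have "t = 0"
  proof (rule ccontr)
    assume tnz: "t \<noteq> 0"
    then have "degree t < degree G0" using degree_mod_less[OF G0nz, of c] unfolding t_def by auto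
    moreover have "card {x. poly t x = 0} \<le> degree t" by (rule card_poly_roots_bound[OF tnz])
    moreover have "{x. poly t x = 0} = UNIV" using pt by auto
    ultimately show False using dG card by simp
  qed
  then show ?thesis unfolding G0_def[symmetric] t_def by (simp add: mod_eq_0_iff_dvd)
qed

lemma allroots:
  fixes r :: "'a::{field,finite} poly poly"
  assumes frob: "\<And>x y :: 'a. (x + y) ^ q = x ^ q + y ^ q"
    and card: "card (UNIV :: 'a set) = q ^ 2" and q2: "q \<ge> 2"
    and dr: "degree r < q" and z: "\<forall>P\<in>HermPts q. ev P r = 0"
  shows "([:0,1:] ^ (q^2) - [:0,1:]) dvd coeff r j"
proof -
  have "poly (coeff r j) \<alpha> = 0" for \<alpha>
  proof -
    define ra where "ra = map_poly (\<lambda>c. poly c \<alpha>) r"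
    have fib: "{b. b ^ q + b = \<alpha> ^ (q + 1)} \<subseteq> {x. poly ra x = 0}"
    proof
      fix b assume "b \<in> {b. b ^ q + b = \<alpha> ^ (q + 1)}"
      then have "(\<alpha>, b) \<in> HermPts q" by (simp add: HermPts_def)
      then have "ev (\<alpha>, b) r = 0" using z by blast
      then show "b \<in> {x. poly ra x = 0}" using heval_ev[of r "(\<alpha>, b)"] by (simp add: heval_def ra_def)
    qed
    have "ra = 0"
    proof (rule ccontr)
      assume nz: "ra \<noteq> 0"
      have "q \<le> card {b. b ^ q + b = \<alpha> ^ (q + 1)}" by (rule fiber_card[OF frob card q2])
      also have "\<dots> \<le> card {x. poly ra x = 0}" by (rule card_mono[OF poly_roots_finite[OF nz] fib])
      also have "\<dots> \<le> degree ra" by (rule card_poly_roots_bound[OF nz])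
      also have "\<dots> \<le> degree r" unfolding ra_def by (rule degree_le) (simp add: coeff_map_poly coeff_eq_0)
      finally show False using dr by simp
    qed
    then have "coeff ra j = 0" by simp
    then show ?thesis by (simp add: ra_def coeff_map_poly)
  qed
  moreover have "2 * 2 \<le> q * q" by (rule mult_le_mono[OF q2 q2])
  then have "q ^ 2 \<ge> 2" by (simp add: power2_eq_square)
  ultimately show ?thesis using all_roots_dvd[OF card] by blast
qed

lemma Gp_eq: "Gp q = [:[:0,1:] ^ (q^2) - [:0,1:]:]"
  by (simp add: Gp_def Xp_def poly_const_pow)

lemma main_div:
  fixes F :: "'a::{field,finite} poly poly"
  assumes frob: "\<And>x y :: 'a. (x + y) ^ q = x ^ q + y ^ q"
    and card: "card (UNIV :: 'a set) = q ^ 2" and q2: "q \<ge> 2" and q0: "of_nat q = (0::'a)"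
    and V: "\<forall>P\<in>HermPts q. V q P k F"
  shows "\<exists>\<Omega>. hermH q dvd (F - Gp q ^ k * \<Omega>)"
  using V
proof (induction k arbitrary: F)
  case 0 then show ?case by (intro exI[of _ F]) simp
next
  case (Suc k)
  define G0 where "G0 = ([:0,1:] ^ (q^2) - [:0,1:] :: 'a poly)"
  obtain Q r where Fr: "F = hermH q * Q + r" "degree r < q" using H_divmod[OF q2] by blast
  have Vr: "V q P (Suc k) r" if "P \<in> HermPts q" for P
  proof -
    have "r = F - Q * hermH q" using Fr by (simp add: algebra_simps)
    then show ?thesis using V_diff[OF Suc.prems[rule_format, OF that] V_Hmult] by simp
  qed
  have "\<forall>P\<in>HermPts q. ev P r = 0" using Vr V_ev by blast
  then have dv: "G0 dvd coeff r j" for j unfolding G0_def by (rule allroots[OF frob card q2 Fr(2)])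
  define F1 where "F1 = map_poly (\<lambda>c. c div G0) r"
  have rF1: "r = Gp q * F1"
  proof (rule poly_eqI)
    fix j
    have "coeff (Gp q * F1) j = G0 * (coeff r j div G0)"
      by (simp add: Gp_eq G0_def F1_def coeff_map_poly)
    also have "\<dots> = coeff r j" using dv[of j] by simp
    finally show "coeff r j = coeff (Gp q * F1) j" by simp
  qed
  have "V q P k F1" if P: "P \<in> HermPts q" for P
  proof -
    obtain a b where ab: "P = (a, b)" by (cases P)
    have N0: "of_nat (q^2) = (0::'a)" using q0 by simp
    have aN: "a ^ (q^2) = a" using ff_pow_card[of a] card by simp
    obtain u where u: "Xp ^ (q^2) - Xp = xP a * [:u:]" "poly u a = -1"
    proof -
      have "2 * 2 \<le> q * q" by (rule mult_le_mono[OF q2 q2])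
      then have "q ^ 2 \<ge> 1" using q2 by (simp add: power2_eq_square)
      then show ?thesis using G_factor[OF N0 aN] that by blast
    qed
    have "V q (a, b) (Suc k) (xP a * [:u:] * F1)"
      using Vr[OF P] rF1 u(1) ab by (simp add: Gp_def)
    then have "V q (a, b) k F1"
      by (rule cancel_x[OF P[unfolded ab] q0 q2, rotated]) (simp add: u(2))
    then show ?thesis using ab by simp
  qed
  then obtain \<Omega> where "hermH q dvd (F1 - Gp q ^ k * \<Omega>)" using Suc.IH by blast
  then obtain E where E: "F1 - Gp q ^ k * \<Omega> = hermH q * E" by (elim dvdE)
  have "F - Gp q ^ Suc k * \<Omega> = hermH q * (Q + Gp q * E)"
  proof -
    have "F - Gp q ^ Suc k * \<Omega> = hermH q * Q + Gp q * (F1 - Gp q ^ k * \<Omega>)"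
      using Fr rF1 by (simp add: algebra_simps)
    then show ?thesis unfolding E by (simp add: algebra_simps)
  qed
  then have "hermH q dvd (F - Gp q ^ Suc k * \<Omega>)" by (rule dvdI)
  then show ?case by blast
qed



definition wle :: "nat \<Rightarrow> 'a::comm_ring_1 poly poly \<Rightarrow> nat \<Rightarrow> bool" where
  "wle q F m \<longleftrightarrow> (\<forall>j. coeff F j \<noteq> 0 \<longrightarrow> degree (coeff F j) * q + j * (q + 1) \<le> m)"

lemma wle_zero [simp]: "wle q 0 m" by (simp add: wle_def)

lemma wle_one: "wle q 1 m" by (auto simp: wle_def coeff_1)

lemma wle_mono: "wle q F m \<Longrightarrow> m \<le> m' \<Longrightarrow> wle q F m'"
  unfolding wle_def using le_trans by blast

lemma wle_add: "wle q A m \<Longrightarrow> wle q B m \<Longrightarrow> wle q (A + B) m"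
  unfolding wle_def
proof (intro allI impI)
  fix j assume A: "\<forall>j. coeff A j \<noteq> 0 \<longrightarrow> degree (coeff A j) * q + j * (q + 1) \<le> m"
    and B: "\<forall>j. coeff B j \<noteq> 0 \<longrightarrow> degree (coeff B j) * q + j * (q + 1) \<le> m"
    and nz: "coeff (A + B) j \<noteq> 0"
  show "degree (coeff (A + B) j) * q + j * (q + 1) \<le> m"
  proof (cases "coeff A j = 0")
    case True then show ?thesis using B nz by simp
  next
    case nA: False
    show ?thesis
    proof (cases "coeff B j = 0")
      case True then show ?thesis using A nz by simp
    next
      case False
      have a1: "degree (coeff A j) * q + j * (q + 1) \<le> m" using A nA by blast
      have b1: "degree (coeff B j) * q + j * (q + 1) \<le> m" using B False by blast
      have "degree (coeff (A + B) j) \<le> degree (coeff A j) \<or> degree (coeff (A + B) j) \<le> degree (coeff B j)"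
        using degree_add_le_max[of "coeff A j" "coeff B j"] by (simp add: max_def split: if_splits)
      then have "degree (coeff (A + B) j) * q \<le> degree (coeff A j) * q \<or> degree (coeff (A + B) j) * q \<le> degree (coeff B j) * q"
        using mult_right_mono by blast
      then show ?thesis using a1 b1 by linarith
    qed
  qed
qed

lemma wle_neg: "wle q (- A) m = wle q A m" by (simp add: wle_def)

lemma wle_diff: "wle q A m \<Longrightarrow> wle q B m \<Longrightarrow> wle q (A - B) m"
  using wle_add[of q A m "- B"] by (simp add: wle_neg)

lemma wle_mult:
  fixes A B :: "'a::idom poly poly"
  assumes q: "q \<ge> 1" and A: "wle q A a" and B: "wle q B b"
  shows "wle q (A * B) (a + b)"
  unfolding wle_def
proof (intro allI impI)
  fix n assume nz: "coeff (A * B) n \<noteq> 0"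
  define D where "D = (a + b - n * (q + 1)) div q"
  have cm: "coeff (A * B) n = (\<Sum>i\<le>n. coeff A i * coeff B (n - i))" by (rule coeff_mult)
  have trm: "degree (coeff A i * coeff B (n - i)) \<le> D \<and> n * (q + 1) \<le> a + b"
    if "i \<le> n" "coeff A i * coeff B (n - i) \<noteq> 0" for i
  proof -
    have nzA: "coeff A i \<noteq> 0" and nzB: "coeff B (n - i) \<noteq> 0" using that by auto
    have 1: "degree (coeff A i) * q + i * (q + 1) \<le> a" using A nzA by (simp add: wle_def)
    have 2: "degree (coeff B (n - i)) * q + (n - i) * (q + 1) \<le> b" using B nzB by (simp add: wle_def)
    have ni: "i * (q + 1) + (n - i) * (q + 1) = n * (q + 1)" using that(1)
      by (simp add: add_mult_distrib[symmetric])
    have 3: "(degree (coeff A i) + degree (coeff B (n - i))) * q + n * (q + 1) \<le> a + b"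
      using 1 2 ni by (simp add: add_mult_distrib)
    have "degree (coeff A i * coeff B (n - i)) \<le> degree (coeff A i) + degree (coeff B (n - i))"
      by (rule degree_mult_le)
    moreover have "(degree (coeff A i) + degree (coeff B (n - i))) \<le> D"
      unfolding D_def using q 3 by (simp add: less_eq_div_iff_mult_less_eq)
    ultimately show ?thesis using 3 by simp
  qed
  have "degree (coeff (A * B) n) \<le> D"
    unfolding cm
  proof (rule degree_sum_le)
    fix i assume "i \<in> {..n}"
    then show "degree (coeff A i * coeff B (n - i)) \<le> D"
      using trm[of i] by (cases "coeff A i * coeff B (n - i) = 0") auto
  qed simp
  moreover have "n * (q + 1) \<le> a + b"
  proof -
    obtain i where "i \<le> n" "coeff A i * coeff B (n - i) \<noteq> 0"
      using nz unfolding cm by (metis (no_types, lifting) atMost_iff sum.neutral)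
    then show ?thesis using trm by blast
  qed
  ultimately show "degree (coeff (A * B) n) * q + n * (q + 1) \<le> a + b"
    unfolding D_def using q by (simp add: less_eq_div_iff_mult_less_eq)
qed

lemma wle_pow:
  fixes A :: "'a::idom poly poly"
  assumes q: "q \<ge> 1" and A: "wle q A a"
  shows "wle q (A ^ n) (n * a)"
proof (induction n)
  case 0 then show ?case by (simp add: wle_one)
next
  case (Suc n) then show ?case using wle_mult[OF q A Suc.IH] by simp
qed

lemma wle_prod:
  fixes g :: "nat \<Rightarrow> 'a::idom poly poly"
  assumes q: "q \<ge> 1" and g: "\<And>\<mu>. \<mu> < h \<Longrightarrow> wle q (g \<mu>) (c \<mu>)"
  shows "wle q (\<Prod>\<mu><h. g \<mu>) (\<Sum>\<mu><h. c \<mu>)"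
  using g
proof (induction h)
  case 0 then show ?case by (simp add: wle_one)
next
  case (Suc h)
  have "wle q ((\<Prod>\<mu><h. g \<mu>) * g h) ((\<Sum>\<mu><h. c \<mu>) + c h)"
    by (rule wle_mult[OF q]) (use Suc in auto)
  then show ?case by simp
qed

lemma hsupp_finite: "finite (hsupp F)"
proof -
  have "hsupp F \<subseteq> (\<Union>j\<le>degree F. {..degree (coeff F j)} \<times> {j})"
  proof
    fix x assume "x \<in> hsupp F"
    then obtain i j where x: "x = (i, j)" "coeff (coeff F j) i \<noteq> 0" by (auto simp: hsupp_def)
    then have "coeff F j \<noteq> 0" by auto
    then have "j \<le> degree F" by (rule le_degree)
    moreover have "i \<le> degree (coeff F j)" using x(2) by (rule le_degree)
    ultimately show "x \<in> (\<Union>j\<le>degree F. {..degree (coeff F j)} \<times> {j})" using x by auto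
  qed
  then show ?thesis by (rule finite_subset) auto
qed

lemma hdeg_le_iff:
  assumes nz: "F \<noteq> 0"
  shows "hdeg q F \<le> m \<longleftrightarrow> wle q F m"
proof -
  have ne: "hsupp F \<noteq> {}"
  proof -
    obtain j where "coeff F j \<noteq> 0" using nz by (metis leading_coeff_0_iff)
    then have "(degree (coeff F j), j) \<in> hsupp F" by (simp add: hsupp_def)
    then show ?thesis by blast
  qed
  have "hdeg q F \<le> m \<longleftrightarrow> (\<forall>x\<in>hsupp F. hweight q x \<le> m)"
    unfolding hdeg_def using hsupp_finite[of F] ne by (simp add: Max_le_iff)
  also have "\<dots> \<longleftrightarrow> wle q F m"
  proof
    assume H: "\<forall>x\<in>hsupp F. hweight q x \<le> m"
    show "wle q F m" unfolding wle_def
    proof (intro allI impI)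
      fix j assume "coeff F j \<noteq> 0"
      then have "(degree (coeff F j), j) \<in> hsupp F" by (simp add: hsupp_def)
      then show "degree (coeff F j) * q + j * (q + 1) \<le> m" using H by (auto simp: hweight_def)
    qed
  next
    assume W: "wle q F m"
    show "\<forall>x\<in>hsupp F. hweight q x \<le> m"
    proof
      fix x assume "x \<in> hsupp F"
      then obtain i j where x: "x = (i, j)" "coeff (coeff F j) i \<noteq> 0" by (auto simp: hsupp_def)
      then have cj: "coeff F j \<noteq> 0" by auto
      have "i \<le> degree (coeff F j)" using x(2) by (rule le_degree)
      then have "i * q \<le> degree (coeff F j) * q" by (rule mult_right_mono) simp
      moreover have "degree (coeff F j) * q + j * (q + 1) \<le> m" using W cj unfolding wle_def by blast
      ultimately have "i * q + j * (q + 1) \<le> m" by linarith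
      then show "hweight q x \<le> m" using x by (simp add: hweight_def)
    qed
  qed
  finally show ?thesis .
qed



lemma wle_monom: "wle q (monom c j) m \<longleftrightarrow> c = 0 \<or> degree c * q + j * (q + 1) \<le> m"
  by (auto simp: wle_def)

lemma wle_reduce:
  fixes F :: "'a::idom poly poly"
  assumes q2: "q \<ge> 2" and W: "wle q F m"
  shows "\<exists>Q r. F = hermH q * Q + r \<and> degree r < q \<and> wle q r m"
  using W
proof (induction "degree F" arbitrary: F rule: less_induct)
  case less
  show ?case
  proof (cases "degree F < q")
    case True then show ?thesis using less.prems by (intro exI[of _ 0] exI[of _ F]) simp
  next
    case False
    define d where "d = degree F"
    define lc where "lc = coeff F d"
    have dq: "d \<ge> q" using False d_def by simp
    then have "F \<noteq> 0" using q2 d_def by auto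
    then have lcnz: "lc \<noteq> 0" by (simp add: lc_def d_def)
    have wlc: "degree lc * q + d * (q + 1) \<le> m" using less.prems lcnz unfolding wle_def lc_def by blast
    define X where "X = ([:0, 1:] :: 'a poly)"
    define F' where "F' = (F - monom lc d) - monom lc (d - q + 1) + monom (lc * X ^ (q + 1)) (d - q)"
    have prodH: "monom lc (d - q) * hermH q = monom lc d + monom lc (d - q + 1) - monom (lc * X ^ (q + 1)) (d - q)"
      using dq by (simp add: H_eq algebra_simps mult_monom X_def)
    have FF': "F = hermH q * monom lc (d - q) + F'"
      unfolding F'_def using prodH by (simp add: algebra_simps)
    have cF': "coeff F' j = 0" if "j \<ge> d" for j
    proof -
      have "coeff F j = (if j = d then lc else 0)"
        using that by (auto simp: lc_def d_def coeff_eq_0)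
      moreover have "d - q + 1 \<noteq> j" "d - q \<noteq> j" using that dq q2 by auto
      ultimately show ?thesis by (simp add: F'_def)
    qed
    have degF': "degree F' < degree F"
    proof (cases "F' = 0")
      case True then show ?thesis using dq q2 d_def by simp
    next
      case False
      then have "coeff F' (degree F') \<noteq> 0" by simp
      then have "\<not> degree F' \<ge> d" using cF' by blast
      then show ?thesis using d_def by simp
    qed
    have wF': "wle q F' m"
    proof -
      have 1: "wle q (F - monom lc d) m"
        using less.prems unfolding wle_def lc_def by (auto simp: d_def)
      have "(d - q + 1) * (q + 1) \<le> d * (q + 1)" using dq q2 by (intro mult_right_mono) auto
      then have 2: "wle q (monom lc (d - q + 1)) m" using wlc by (simp add: wle_monom)
      have dX: "degree (lc * X ^ (q + 1)) = degree lc + (q + 1)"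
        using lcnz by (simp add: degree_mult_eq X_def degree_power_eq)
      have "(q + 1) * q + (d - q) * (q + 1) = d * (q + 1)"
      proof -
        have "(q + 1) * q + (d - q) * (q + 1) = (q + (d - q)) * (q + 1)" by (simp add: algebra_simps)
        also have "q + (d - q) = d" using dq by simp
        finally show ?thesis .
      qed
      then have "degree (lc * X ^ (q + 1)) * q + (d - q) * (q + 1) = degree lc * q + d * (q + 1)"
        unfolding dX by (simp add: algebra_simps)
      then have 3: "wle q (monom (lc * X ^ (q + 1)) (d - q)) m" using wlc by (simp add: wle_monom)
      show ?thesis unfolding F'_def by (intro wle_add wle_diff 1 2 3)
    qed
    obtain Q r where "F' = hermH q * Q + r" "degree r < q" "wle q r m"
      using less.hyps[OF degF' wF'] by blast
    then show ?thesis using FF' by (intro exI[of _ "monom lc (d - q) + Q"] exI[of _ r]) (simp add: algebra_simps)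
  qed
qed

lemma V_prodset:
  fixes h :: nat and g :: "nat \<Rightarrow> 'a::comm_ring_1 poly poly"
  assumes "\<And>\<mu>. \<mu> < h \<Longrightarrow> V q P (c \<mu>) (g \<mu>)"
  shows "V q P (\<Sum>\<mu><h. c \<mu>) (\<Prod>\<mu><h. g \<mu>)"
  using assms
proof (induction h)
  case 0 then show ?case by (simp, intro V_I[where m=1 and d=0]) simp_all
next
  case (Suc h)
  have "V q P ((\<Sum>\<mu><h. c \<mu>) + c h) ((\<Prod>\<mu><h. g \<mu>) * g h)"
    by (rule V_prod) (use Suc in auto)
  then show ?case by simp
qed



theorem lemma4:
  fixes q h mH s :: nat
    and f R :: "nat \<Rightarrow> 'a::{field,finite} poly poly"
    and r :: "nat \<Rightarrow> 'a \<times> 'a \<Rightarrow> 'a"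
    and Lam :: "'a poly poly"
    and ii :: "nat \<Rightarrow> nat"
  assumes q_pp: "\<exists>p k. prime p \<and> k > 0 \<and> q = p ^ k"
    and card: "card (UNIV :: 'a set) = q ^ 2"
    and h: "h \<ge> 1"
    and mH: "2 * (int (hgenus q) - 1) < int mH" "mH < q ^ 3"
    and f: "\<forall>\<mu><h. hreduced q (f \<mu>) \<and> (f \<mu> = 0 \<or> hdeg q (f \<mu>) \<le> mH)"
    and R: "\<forall>\<mu><h. hreduced q (R \<mu>) \<and> (R \<mu> = 0 \<or> hdeg q (R \<mu>) < q ^ 3 + 2 * hgenus q)
              \<and> (\<forall>P\<in>HermPts q. heval (R \<mu>) P = r \<mu> P)"
    and Lam_red: "hreduced q Lam"
    and Lam_monic: "hmonic q Lam"
    and Lam_val: "\<forall>P\<in>{P \<in> HermPts q. \<exists>\<mu><h. r \<mu> P \<noteq> heval (f \<mu>) P}. hval_ge q P s Lam"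
    and Lam_min: "\<forall>\<Lambda>. hreduced q \<Lambda> \<and> \<Lambda> \<noteq> 0
                    \<and> (\<forall>P\<in>{P \<in> HermPts q. \<exists>\<mu><h. r \<mu> P \<noteq> heval (f \<mu>) P}. hval_ge q P s \<Lambda>)
                    \<longrightarrow> hdeg q Lam \<le> hdeg q \<Lambda>"
    and s: "s > 0"
    and ii: "(\<Sum>\<mu><h. ii \<mu>) \<le> s"
  shows "\<exists>!\<Omega>. hreduced q \<Omega>
           \<and> (\<Omega> = 0 \<or> int (hdeg q \<Omega>) \<le> int (hdeg q Lam) + int (\<Sum>\<mu><h. ii \<mu>) * (2 * int (hgenus q) - 1))
           \<and> hcong q (Lam * (\<Prod>\<mu><h. (f \<mu> - R \<mu>) ^ ii \<mu>)) (Gp q ^ (\<Sum>\<mu><h. ii \<mu>) * \<Omega>)"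
proof -
  obtain p kk where pk: "prime p" "kk > 0" "q = p ^ kk" using q_pp by blast
  note cf = char_facts[OF pk card]
  have q0: "of_nat q = (0::'a)" by (rule cf(2))
  have frob: "\<And>x y :: 'a. (x + y) ^ q = x ^ q + y ^ q" by (rule cf(3))
  have q2: "q \<ge> 2" by (rule cf(4))
  define k where "k = (\<Sum>\<mu><h. ii \<mu>)"
  define g where "g = hgenus q"
  define D where "D = q ^ 3 + 2 * g - 1"
  define H where "H = (hermH q :: 'a poly poly)"
  define PP where "PP = (\<Prod>\<mu><h. (f \<mu> - R \<mu>) ^ ii \<mu>)"
  define F where "F = Lam * PP"
  define G0 where "G0 = ([:0,1:] ^ (q^2) - [:0,1:] :: 'a poly)"
  have qq: "2 * 2 \<le> q * q" by (rule mult_le_mono[OF q2 q2])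
  have g2: "2 * g = q * (q - 1)"
  proof -
    have "even (q * (q - 1))" by (simp; blast)
    then show ?thesis unfolding g_def hgenus_def by simp
  qed
  have g1: "2 * g \<ge> 1"
  proof -
    have "q - 1 \<ge> 1" using q2 by simp
    then have "1 * 1 \<le> q * (q - 1)" using q2 by (intro mult_le_mono) auto
    then show ?thesis using g2 by simp
  qed
  have Lnz: "Lam \<noteq> 0" using Lam_monic by (simp add: hmonic_def)
  have VF: "V q P k F" if P: "P \<in> HermPts q" for P
  proof (cases "\<exists>\<mu><h. r \<mu> P \<noteq> heval (f \<mu>) P")
    case True
    then have "hval_ge q P s Lam" using Lam_val P by blast
    then have "V q P s Lam" by (rule hval_ge_V)
    then have "V q P k Lam" using ii by (intro V_mono[of k s]) (simp_all add: k_def)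
    then have "V q P k (PP * Lam)" by (rule V_mult)
    then show ?thesis by (simp add: F_def mult.commute)
  next
    case False
    obtain a b where ab: "P = (a, b)" by (cases P)
    have "V q P (\<Sum>\<mu><h. ii \<mu>) PP" unfolding PP_def
    proof (rule V_prodset)
      fix \<mu> assume \<mu>: "\<mu> < h"
      have "ev P (f \<mu> - R \<mu>) = 0" using False \<mu> R P by (simp add: heval_ev)
      then have "f \<mu> - R \<mu> \<in> Mk P 1" using zero_Mk1 ab by blast
      then have "V q P 1 (f \<mu> - R \<mu>)" by (intro V_I[where d=0]) simp_all
      then show "V q P (ii \<mu>) ((f \<mu> - R \<mu>) ^ ii \<mu>)" by (rule V_pow)
    qed
    then have "V q P k (Lam * PP)" unfolding k_def by (rule V_mult)
    then show ?thesis by (simp add: F_def)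
  qed
  obtain \<Omega>0 where \<Omega>0: "hermH q dvd (F - Gp q ^ k * \<Omega>0)"
    using main_div[OF frob card q2 q0] VF by blast
  obtain Q \<Omega> where Q\<Omega>: "\<Omega>0 = hermH q * Q + \<Omega>" "degree \<Omega> < q" using H_divmod[OF q2] by blast
  have dvF: "hermH q dvd (F - Gp q ^ k * \<Omega>)"
  proof -
    have "F - Gp q ^ k * \<Omega> = (F - Gp q ^ k * \<Omega>0) + hermH q * (Gp q ^ k * Q)"
      using Q\<Omega> by (simp add: algebra_simps)
    then show ?thesis using \<Omega>0 by (metis dvd_add dvd_triv_left)
  qed
  have Gk: "Gp q ^ k = [:G0 ^ k:]" by (simp add: Gp_eq G0_def poly_const_pow)
  have G0nz: "G0 \<noteq> 0"
  proof -
    have "coeff [:0,1::'a:] (q^2) = 0" by (rule coeff_eq_0) (use qq in \<open>simp add: power2_eq_square\<close>)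
    then have "coeff G0 (q^2) = 1" using coeff_linear_power[of "0::'a" "q^2"] by (simp add: G0_def)
    then show ?thesis by auto
  qed
  have dG0: "degree G0 = q ^ 2"
  proof (rule antisym)
    have "coeff [:0,1::'a:] (q^2) = 0" by (rule coeff_eq_0) (use qq in \<open>simp add: power2_eq_square\<close>)
    then have "coeff G0 (q^2) = 1" using coeff_linear_power[of "0::'a" "q^2"] by (simp add: G0_def)
    then show "q ^ 2 \<le> degree G0" by (intro le_degree) simp
    show "degree G0 \<le> q ^ 2" unfolding G0_def
      using qq q2 by (intro degree_diff_le) (auto simp: degree_linear_power[of "0::'a", simplified] power2_eq_square)
  qed
  have red_G: "degree (Gp q ^ k * X) < q" if "degree X < q" for X :: "'a poly poly"
    using that unfolding Gk by simp
  have wf: "wle q (f \<mu> - R \<mu>) D" if \<mu>: "\<mu> < h" for \<mu>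
  proof (rule wle_diff)
    show "wle q (f \<mu>) D"
    proof (cases "f \<mu> = 0")
      case False
      then have "hdeg q (f \<mu>) \<le> mH" using f \<mu> by blast
      then have "hdeg q (f \<mu>) \<le> D" using mH(2) unfolding D_def by linarith
      then show ?thesis using hdeg_le_iff[OF False] by blast
    qed simp
    show "wle q (R \<mu>) D"
    proof (cases "R \<mu> = 0")
      case False
      then have "hdeg q (R \<mu>) < q ^ 3 + 2 * g" using R \<mu> unfolding g_def by blast
      then have "hdeg q (R \<mu>) \<le> D" unfolding D_def by linarith
      then show ?thesis using hdeg_le_iff[OF False] by blast
    qed simp
  qed
  have q1: "q \<ge> 1" using q2 by simp
  have "wle q PP (\<Sum>\<mu><h. ii \<mu> * D)" unfolding PP_def
    by (rule wle_prod[OF q1]) (rule wle_pow[OF q1 wf])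
  then have wPi: "wle q PP (k * D)" by (simp add: k_def sum_distrib_right)
  have wL: "wle q Lam (hdeg q Lam)" using hdeg_le_iff[OF Lnz] by blast
  have wF: "wle q F (hdeg q Lam + k * D)" unfolding F_def by (rule wle_mult[OF q1 wL wPi])
  obtain Q' rr where rr: "F = hermH q * Q' + rr" "degree rr < q" "wle q rr (hdeg q Lam + k * D)"
    using wle_reduce[OF q2 wF] by blast
  have "rr - Gp q ^ k * \<Omega> = 0"
  proof (rule red_unique[OF q2])
    show "degree (rr - Gp q ^ k * \<Omega>) < q"
    proof -
      have "degree (rr - Gp q ^ k * \<Omega>) \<le> max (degree rr) (degree (Gp q ^ k * \<Omega>))" by (rule degree_diff_le_max)
      then show ?thesis using rr(2) red_G[OF Q\<Omega>(2)] by simp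
    qed
    have "rr - Gp q ^ k * \<Omega> = (F - Gp q ^ k * \<Omega>) - hermH q * Q'" using rr(1) by (simp add: algebra_simps)
    then show "hermH q dvd (rr - Gp q ^ k * \<Omega>)" using dvF by (metis dvd_diff dvd_triv_left)
  qed
  then have rrO: "rr = Gp q ^ k * \<Omega>" by simp
  have bound: "wle q \<Omega> (hdeg q Lam + k * (2 * g - 1))"
    unfolding wle_def
  proof (intro allI impI)
    fix j assume nz: "coeff \<Omega> j \<noteq> 0"
    have crr: "coeff rr j = G0 ^ k * coeff \<Omega> j" by (simp add: rrO Gk)
    then have "coeff rr j \<noteq> 0" using nz G0nz by simp
    then have "degree (coeff rr j) * q + j * (q + 1) \<le> hdeg q Lam + k * D" using rr(3) unfolding wle_def by blast
    moreover have "degree (coeff rr j) = k * q ^ 2 + degree (coeff \<Omega> j)"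
      unfolding crr using nz G0nz by (simp add: degree_mult_eq degree_power_eq dG0)
    ultimately have "k * q ^ 2 * q + degree (coeff \<Omega> j) * q + j * (q + 1) \<le> hdeg q Lam + k * D"
      by (simp add: algebra_simps)
    moreover have "k * D = k * q ^ 2 * q + k * (2 * g - 1)"
      unfolding D_def using g1 by (simp add: algebra_simps power3_eq_cube power2_eq_square)
    ultimately show "degree (coeff \<Omega> j) * q + j * (q + 1) \<le> hdeg q Lam + k * (2 * g - 1)" by linarith
  qed
  show ?thesis
  proof (rule ex1I[of _ \<Omega>])
    show "hreduced q \<Omega> \<and> (\<Omega> = 0 \<or> int (hdeg q \<Omega>) \<le> int (hdeg q Lam) + int (\<Sum>\<mu><h. ii \<mu>) * (2 * int (hgenus q) - 1))
           \<and> hcong q (Lam * (\<Prod>\<mu><h. (f \<mu> - R \<mu>) ^ ii \<mu>)) (Gp q ^ (\<Sum>\<mu><h. ii \<mu>) * \<Omega>)"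
    proof (intro conjI)
      show "hreduced q \<Omega>" using Q\<Omega>(2) by (simp add: hreduced_def)
      show "\<Omega> = 0 \<or> int (hdeg q \<Omega>) \<le> int (hdeg q Lam) + int (\<Sum>\<mu><h. ii \<mu>) * (2 * int (hgenus q) - 1)"
      proof (cases "\<Omega> = 0")
        case False
        then have "hdeg q \<Omega> \<le> hdeg q Lam + k * (2 * g - 1)" using hdeg_le_iff[OF False] bound by blast
        then have "int (hdeg q \<Omega>) \<le> int (hdeg q Lam + k * (2 * g - 1))" by (simp only: of_nat_le_iff)
        then have "int (hdeg q \<Omega>) \<le> int (hdeg q Lam) + int k * int (2 * g - 1)" by (simp only: of_nat_add of_nat_mult)
        moreover have "int (2 * g - 1) = 2 * int g - 1" using g1 by simp
        ultimately show ?thesis by (simp add: k_def g_def)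
      qed simp
      show "hcong q (Lam * (\<Prod>\<mu><h. (f \<mu> - R \<mu>) ^ ii \<mu>)) (Gp q ^ (\<Sum>\<mu><h. ii \<mu>) * \<Omega>)"
        using dvF by (simp add: hcong_def F_def PP_def k_def)
    qed
  next
    fix \<Omega>' assume A: "hreduced q \<Omega>' \<and> (\<Omega>' = 0 \<or> int (hdeg q \<Omega>') \<le> int (hdeg q Lam) + int (\<Sum>\<mu><h. ii \<mu>) * (2 * int (hgenus q) - 1))
           \<and> hcong q (Lam * (\<Prod>\<mu><h. (f \<mu> - R \<mu>) ^ ii \<mu>)) (Gp q ^ (\<Sum>\<mu><h. ii \<mu>) * \<Omega>')"
    then have d1: "degree \<Omega>' < q" and dv1: "hermH q dvd (F - Gp q ^ k * \<Omega>')"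
      by (simp_all add: hreduced_def hcong_def F_def PP_def k_def)
    have "hermH q dvd ((F - Gp q ^ k * \<Omega>) - (F - Gp q ^ k * \<Omega>'))" using dvF dv1 by (rule dvd_diff)
    moreover have "(F - Gp q ^ k * \<Omega>) - (F - Gp q ^ k * \<Omega>') = [:G0 ^ k:] * (\<Omega>' - \<Omega>)"
      unfolding Gk by (simp add: algebra_simps smult_diff_right)
    ultimately have "hermH q dvd [:G0 ^ k:] * (\<Omega>' - \<Omega>)" by simp
    moreover have "degree ([:G0 ^ k:] * (\<Omega>' - \<Omega>)) < q"
    proof -
      have "degree (\<Omega>' - \<Omega>) \<le> max (degree \<Omega>') (degree \<Omega>)" by (rule degree_diff_le_max)
      then show ?thesis using d1 Q\<Omega>(2) by (auto simp: max_def split: if_splits)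
    qed
    ultimately have "[:G0 ^ k:] * (\<Omega>' - \<Omega>) = 0" using red_unique[OF q2] by blast
    then show "\<Omega>' = \<Omega>" using G0nz by simp
  qed
qed


end
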